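(* For every variable-free formula $\psi$, the logics $\mathrm{E4}+\psi$, $\mathrm{S04}+\psi$ and $\mathrm{EMC4}+\psi$ have the finite model property (there is a class of finite neighborhood frames whose set of valid formulas is exactly the logic).
   Context: Modal formulas are built from a countable set $Var$ of propositional variables using $\neg$, $\wedge$ and the unary operator $\Box$; a formula is variable-free if no element of $Var$ occurs in it except within the constants $\top$, $\bot$ (here $\top:=\neg(p\wedge\neg p)$, $\bot:=p\wedge\neg p$ are treated as constants). A (modal) logic is a set of formulas containing all classical tautologies and closed under modus ponens, uniform substitution, and the rule (RE): from $\varphi\leftrightarrow\psi$ infer $\Box\varphi\leftrightarrow\Box\psi$. $\mathrm{E}$ is the smallest logic; $\mathrm{L}+\psi$ is the smallest logic containing $\mathrm{L}\cup\{\psi\}$. Axioms: $(4)\ \Box p\to\Box\Box p$; $(\mathrm{T})\ \Box p\to p$; $(\mathrm{M})\ \Box(p\wedge q)\to(\Box p\wedge\Box q)$; $(\mathrm{C})\ (\Box p\wedge\Box q)\to\Box(p\wedge q)$. $\mathrm{E4}=\mathrm{E}+4$, $\mathrm{EMC4}=\mathrm{E4}+\mathrm{M}+\mathrm{C}$, $\mathrm{S04}=\mathrm{E4}+\mathrm{T}+\mathrm{M}$. A neighborhood frame is $(W,\bm{\Box})$ with $W\neq\varnothing$, $\bm{\Box}:\mathcal P(W)\to\mathcal P(W)$; models add $V:Var\to\mathcal P(W)$; truth sets: $|p|_M=V(p)$, $|\neg\varphi|_M=W\setminus|\varphi|_M$, $|\varphi\wedge\psi|_M=|\varphi|_M\cap|\psi|_M$,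 $|\Box\varphi|_M=\bm{\Box}|\varphi|_M$; $\varphi$ is valid on a frame if $|\varphi|_M=W$ for all models $M$ on it. *)

theory Defs
  imports Main
begin

datatype fm = Var nat | Neg fm | Conj fm fm | Box fm

definition p0 :: fm where "p0 = Var 0"
definition q0 :: fm where "q0 = Var 1"

definition Top :: fm where "Top = Neg (Conj p0 (Neg p0))"
definition Bot :: fm where "Bot = Conj p0 (Neg p0)"

definition Imp :: "fm \<Rightarrow> fm \<Rightarrow> fm" where "Imp a b = Neg (Conj a (Neg b))"
definition Iff :: "fm \<Rightarrow> fm \<Rightarrow> fm" where "Iff a b = Conj (Imp a b) (Imp b a)"

text \<open>Variable-free formulas: no variable occurs except inside the constants Top, Bot.\<close>
inductive variable_free :: "fm \<Rightarrow> bool" where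
  vf_top: "variable_free Top"
| vf_bot: "variable_free Bot"
| vf_neg: "variable_free a \<Longrightarrow> variable_free (Neg a)"
| vf_conj: "variable_free a \<Longrightarrow> variable_free b \<Longrightarrow> variable_free (Conj a b)"
| vf_box: "variable_free a \<Longrightarrow> variable_free (Box a)"

fun peval :: "(fm \<Rightarrow> bool) \<Rightarrow> fm \<Rightarrow> bool" where
  "peval v (Var n) = v (Var n)"
| "peval v (Neg a) = (\<not> peval v a)"
| "peval v (Conj a b) = (peval v a \<and> peval v b)"
| "peval v (Box a) = v (Box a)"

definition tautology :: "fm \<Rightarrow> bool" where
  "tautology a \<longleftrightarrow> (\<forall>v. peval v a)"

fun subst :: "(nat \<Rightarrow> fm) \<Rightarrow> fm \<Rightarrow> fm" where
  "subst s (Var n) = s n"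
| "subst s (Neg a) = Neg (subst s a)"
| "subst s (Conj a b) = Conj (subst s a) (subst s b)"
| "subst s (Box a) = Box (subst s a)"

definition is_logic :: "fm set \<Rightarrow> bool" where
  "is_logic L \<longleftrightarrow>
     (\<forall>a. tautology a \<longrightarrow> a \<in> L)
   \<and> (\<forall>a b. a \<in> L \<longrightarrow> Imp a b \<in> L \<longrightarrow> b \<in> L)
   \<and> (\<forall>a s. a \<in> L \<longrightarrow> subst s a \<in> L)
   \<and> (\<forall>a b. Iff a b \<in> L \<longrightarrow> Iff (Box a) (Box b) \<in> L)"

definition logic_gen :: "fm set \<Rightarrow> fm set" where
  "logic_gen A = \<Inter> {L. is_logic L \<and> A \<subseteq> L}"

definition logicE :: "fm set" where "logicE = logic_gen {}"

definition plus :: "fm set \<Rightarrow> fm \<Rightarrow> fm set" where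
  "plus L a = logic_gen (L \<union> {a})"

definition ax4 :: fm where "ax4 = Imp (Box p0) (Box (Box p0))"
definition axT :: fm where "axT = Imp (Box p0) p0"
definition axM :: fm where "axM = Imp (Box (Conj p0 q0)) (Conj (Box p0) (Box q0))"
definition axC :: fm where "axC = Imp (Conj (Box p0) (Box q0)) (Box (Conj p0 q0))"

definition E4 :: "fm set" where "E4 = plus logicE ax4"
definition EMC4 :: "fm set" where "EMC4 = plus (plus E4 axM) axC"
definition S04 :: "fm set" where "S04 = plus (plus E4 axT) axM"

text \<open>Frames are represented with carrier a subset of nat (any finite/countable frame
  is isomorphic to one of these). A frame is (W, B) with W nonempty and B mapping
  subsets of W to subsets of W; values of B outside P(W) are irrelevant.\<close>
type_synonym frame = "nat set \<times> (nat set \<Rightarrow> nat set)"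

definition is_frame :: "frame \<Rightarrow> bool" where
  "is_frame F \<longleftrightarrow> fst F \<noteq> {} \<and> (\<forall>X. X \<subseteq> fst F \<longrightarrow> snd F X \<subseteq> fst F)"

fun truth :: "frame \<Rightarrow> (nat \<Rightarrow> nat set) \<Rightarrow> fm \<Rightarrow> nat set" where
  "truth F V (Var n) = V n"
| "truth F V (Neg a) = fst F - truth F V a"
| "truth F V (Conj a b) = truth F V a \<inter> truth F V b"
| "truth F V (Box a) = snd F (truth F V a)"

definition valid_in :: "frame \<Rightarrow> fm \<Rightarrow> bool" where
  "valid_in F a \<longleftrightarrow> (\<forall>V. (\<forall>n. V n \<subseteq> fst F) \<longrightarrow> truth F V a = fst F)"

definition fmp :: "fm set \<Rightarrow> bool" where
  "fmp L \<longleftrightarrow> (\<exists>C. (\<forall>F\<in>C. is_frame F \<and> finite (fst F))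
                \<and> L = {a. \<forall>F\<in>C. valid_in F a})"

end

theory Submission
  imports Defs
begin

fun conjs :: "fm list \<Rightarrow> fm" where
  "conjs [] = Top" | "conjs (a#as) = Conj a (conjs as)"

lemma peval_Top[simp]: "peval v Top" by (simp add: Top_def)
lemma peval_Imp[simp]: "peval v (Imp a b) = (peval v a \<longrightarrow> peval v b)" by (simp add: Imp_def)
lemma peval_Iff[simp]: "peval v (Iff a b) = (peval v a \<longleftrightarrow> peval v b)" by (auto simp: Iff_def)
lemma peval_conjs[simp]: "peval v (conjs xs) = (\<forall>x\<in>set xs. peval v x)" by (induct xs) auto

lemma subst_Imp[simp]: "subst s (Imp a b) = Imp (subst s a) (subst s b)" by (simp add: Imp_def)

lemma logic_taut: "is_logic L \<Longrightarrow> tautology a \<Longrightarrow> a \<in> L" unfolding is_logic_def by blast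
lemma logic_mp: "is_logic L \<Longrightarrow> a \<in> L \<Longrightarrow> Imp a b \<in> L \<Longrightarrow> b \<in> L" unfolding is_logic_def by blast
lemma logic_subst: "is_logic L \<Longrightarrow> a \<in> L \<Longrightarrow> subst s a \<in> L" unfolding is_logic_def by blast
lemma logic_RE: "is_logic L \<Longrightarrow> Iff a b \<in> L \<Longrightarrow> Iff (Box a) (Box b) \<in> L" unfolding is_logic_def by blast

lemma taut_cons_aux:
  assumes L: "is_logic L"
  shows "set xs \<subseteq> L \<Longrightarrow> \<forall>b. (\<forall>v. (\<forall>x\<in>set xs. peval v x) \<longrightarrow> peval v b) \<longrightarrow> b \<in> L"
proof (induct xs)
  case Nil
  show ?case
  proof (intro allI impI)
    fix b assume "\<forall>v. (\<forall>x\<in>set []. peval v x) \<longrightarrow> peval v b"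
    then have "tautology b" unfolding tautology_def by simp
    then show "b \<in> L" using L logic_taut by blast
  qed
next
  case (Cons x xs)
  have xs: "set xs \<subseteq> L" and x: "x \<in> L" using Cons.prems by auto
  show ?case
  proof (intro allI impI)
    fix b assume H: "\<forall>v. (\<forall>y\<in>set (x # xs). peval v y) \<longrightarrow> peval v b"
    have "\<forall>v. (\<forall>y\<in>set xs. peval v y) \<longrightarrow> peval v (Imp x b)" using H by simp
    then have "Imp x b \<in> L" using Cons.hyps[OF xs] by blast
    then show "b \<in> L" using logic_mp[OF L x] by blast
  qed
qed

lemma taut_cons:
  assumes "is_logic L" "set xs \<subseteq> L" "\<And>v. (\<forall>x\<in>set xs. peval v x) \<Longrightarrow> peval v b"
  shows "b \<in> L"
  using taut_cons_aux[OF assms(1,2)] assms(3) by blast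

lemma tc1:
  assumes "is_logic L" "a \<in> L" "\<And>v. peval v a \<Longrightarrow> peval v b" shows "b \<in> L"
  by (rule taut_cons[OF assms(1), of "[a]"]) (use assms in auto)
lemma tc2:
  assumes "is_logic L" "a \<in> L" "b \<in> L" "\<And>v. peval v a \<Longrightarrow> peval v b \<Longrightarrow> peval v c" shows "c \<in> L"
  by (rule taut_cons[OF assms(1), of "[a, b]"]) (use assms in auto)
lemma tc3:
  assumes "is_logic L" "a \<in> L" "b \<in> L" "c \<in> L"
    "\<And>v. peval v a \<Longrightarrow> peval v b \<Longrightarrow> peval v c \<Longrightarrow> peval v d" shows "d \<in> L"
  by (rule taut_cons[OF assms(1), of "[a, b, c]"]) (use assms in auto)

lemma ax4_inst: "is_logic L \<Longrightarrow> ax4 \<in> L \<Longrightarrow> Imp (Box p) (Box (Box p)) \<in> L"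
  using logic_subst[of L ax4 "\<lambda>_. p"] by (simp add: ax4_def p0_def)
lemma axT_inst: "is_logic L \<Longrightarrow> axT \<in> L \<Longrightarrow> Imp (Box p) p \<in> L"
  using logic_subst[of L axT "\<lambda>_. p"] by (simp add: axT_def p0_def)
lemma axM_inst: "is_logic L \<Longrightarrow> axM \<in> L \<Longrightarrow> Imp (Box (Conj p q)) (Conj (Box p) (Box q)) \<in> L"
  using logic_subst[of L axM "\<lambda>n. if n = 0 then p else q"] by (simp add: axM_def p0_def q0_def)
lemma axC_inst: "is_logic L \<Longrightarrow> axC \<in> L \<Longrightarrow> Imp (Conj (Box p) (Box q)) (Box (Conj p q)) \<in> L"
  using logic_subst[of L axC "\<lambda>n. if n = 0 then p else q"] by (simp add: axC_def p0_def q0_def)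

lemma mono_rule:
  assumes L: "is_logic L" and M: "axM \<in> L" and pq: "Imp p q \<in> L"
  shows "Imp (Box p) (Box q) \<in> L"
proof -
  have "Iff p (Conj p q) \<in> L" using pq by (rule tc1[OF L]) auto
  then have "Iff (Box p) (Box (Conj p q)) \<in> L" by (rule logic_RE[OF L])
  moreover have "Imp (Box (Conj p q)) (Conj (Box p) (Box q)) \<in> L" by (rule axM_inst[OF L M])
  ultimately show ?thesis
    by (rule tc2[OF L]) auto
qed

lemma lg_least: "is_logic L' \<Longrightarrow> A \<subseteq> L' \<Longrightarrow> logic_gen A \<subseteq> L'"
  unfolding logic_gen_def by blast
lemma lg_incl: "A \<subseteq> logic_gen A" unfolding logic_gen_def by blast
lemma lg_logic: "is_logic (logic_gen A)"
  unfolding logic_gen_def is_logic_def by blast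

lemma truth_sub: "is_frame F \<Longrightarrow> \<forall>n. V n \<subseteq> fst F \<Longrightarrow> truth F V a \<subseteq> fst F"
  by (induct a) (auto simp: is_frame_def)

lemma truth_peval: "w \<in> fst F \<Longrightarrow> (w \<in> truth F (V :: nat \<Rightarrow> nat set) a) = peval (\<lambda>x. w \<in> truth F V x) a"
  by (induct a) auto

lemma truth_subst: "truth F V (subst s a) = truth F (\<lambda>n. truth F V (s n)) a"
  by (induct a) auto

lemma valid_logic: assumes F: "is_frame F" shows "is_logic {a. valid_in F a}"
proof -
  have 1: "valid_in F a" if "tautology a" for a
    unfolding valid_in_def
  proof (intro allI impI)
    fix V :: "nat \<Rightarrow> nat set" assume V: "\<forall>n. V n \<subseteq> fst F"
    show "truth F V a = fst F"
      using truth_sub[OF F V, of a] truth_peval[of _ F V a] that unfolding tautology_def by blast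
  qed
  have 2: "valid_in F b" if "valid_in F a" "valid_in F (Imp a b)" for a b
  proof -
    have "\<forall>V. (\<forall>n. V n \<subseteq> fst F) \<longrightarrow> truth F V b = fst F"
    proof (intro allI impI)
      fix V :: "nat \<Rightarrow> nat set" assume V: "\<forall>n. V n \<subseteq> fst F"
      have a: "truth F V a = fst F" using that(1) V unfolding valid_in_def by blast
      have i: "truth F V (Imp a b) = fst F" using that(2) V unfolding valid_in_def by blast
      show "truth F V b = fst F" using a i truth_sub[OF F V, of b] unfolding Imp_def by auto
    qed
    then show ?thesis unfolding valid_in_def .
  qed
  have 3: "valid_in F (subst s a)" if "valid_in F a" for a s
    unfolding valid_in_def
  proof (intro allI impI)
    fix V :: "nat \<Rightarrow> nat set" assume V: "\<forall>n. V n \<subseteq> fst F"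
    have h: "\<forall>n. truth F V (s n) \<subseteq> fst F" using truth_sub[OF F V] by blast
    have "\<forall>V'. (\<forall>n. V' n \<subseteq> fst F) \<longrightarrow> truth F V' a = fst F" using that unfolding valid_in_def .
    then have "(\<forall>n. truth F V (s n) \<subseteq> fst F) \<longrightarrow> truth F (\<lambda>n. truth F V (s n)) a = fst F"
      by (rule spec)
    then have "truth F (\<lambda>n. truth F V (s n)) a = fst F" using h by (rule mp)
    then show "truth F V (subst s a) = fst F" by (simp add: truth_subst)
  qed
  have 4: "valid_in F (Iff (Box a) (Box b))" if "valid_in F (Iff a b)" for a b
    unfolding valid_in_def
  proof (intro allI impI)
    fix V :: "nat \<Rightarrow> nat set" assume V: "\<forall>n. V n \<subseteq> fst F"
    have i: "truth F V (Iff a b) = fst F" using that V unfolding valid_in_def by blast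
    have "truth F V a = truth F V b"
      using i truth_sub[OF F V, of a] truth_sub[OF F V, of b] unfolding Iff_def Imp_def
      by auto
    then show "truth F V (Iff (Box a) (Box b)) = fst F" by (auto simp: Iff_def Imp_def)
  qed
  show ?thesis unfolding is_logic_def using 1 2 3 4 by blast
qed

lemma vf_indep: "variable_free \<psi> \<Longrightarrow> truth F V \<psi> = truth F V' \<psi>"
  by (induct rule: variable_free.induct) (auto simp: Top_def Bot_def p0_def)


fun subf :: "fm \<Rightarrow> fm list" where
  "subf (Var n) = [Var n]"
| "subf (Neg a) = Neg a # subf a"
| "subf (Conj a b) = Conj a b # subf a @ subf b"
| "subf (Box a) = Box a # subf a"

lemma subf_self: "a \<in> set (subf a)" by (cases a) auto

lemma subf_trans: "x \<in> set (subf y) \<Longrightarrow> set (subf x) \<subseteq> set (subf y)"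
  by (induct y) auto

locale canon =
  fixes L :: "fm set" and S :: "fm list"
  assumes logic: "is_logic L"
    and clN: "\<And>a. Neg a \<in> set S \<Longrightarrow> a \<in> set S"
    and clC: "\<And>a b. Conj a b \<in> set S \<Longrightarrow> a \<in> set S \<and> b \<in> set S"
    and clB: "\<And>a. Box a \<in> set S \<Longrightarrow> a \<in> set S"
begin

definition ct :: "fm set \<Rightarrow> fm" where
  "ct t = conjs (map (\<lambda>x. if x \<in> t then x else Neg x) S)"
definition sat :: "fm set \<Rightarrow> fm \<Rightarrow> bool" where "sat t \<phi> \<longleftrightarrow> Imp (ct t) \<phi> \<in> L"
definition cons :: "fm set \<Rightarrow> bool" where "cons t \<longleftrightarrow> Neg (ct t) \<notin> L"
definition Ty :: "fm set set" where "Ty = {t. t \<subseteq> set S \<and> cons t}"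

lemma peval_lits: "peval v (conjs (map (\<lambda>x. if x \<in> t then x else Neg x) xs)) = (\<forall>x\<in>set xs. peval v x = (x \<in> t))"
  by (induct xs) auto

lemma peval_ct: "peval v (ct t) = (\<forall>x\<in>set S. peval v x = (x \<in> t))"
  unfolding ct_def by (rule peval_lits)

lemma sat_taut:
  assumes "\<forall>x\<in>set xs. sat t x" "\<And>v. (\<forall>x\<in>set xs. peval v x) \<Longrightarrow> peval v b"
  shows "sat t b"
  unfolding sat_def
proof (rule taut_cons[OF logic, of "map (Imp (ct t)) xs"])
  show "set (map (Imp (ct t)) xs) \<subseteq> L" using assms(1) unfolding sat_def by auto
  fix v assume "\<forall>x\<in>set (map (Imp (ct t)) xs). peval v x"
  then show "peval v (Imp (ct t) b)" using assms(2)[of v] by auto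
qed

lemma st1: "sat t a \<Longrightarrow> (\<And>v. peval v a \<Longrightarrow> peval v b) \<Longrightarrow> sat t b"
  by (rule sat_taut[of "[a]"]) auto
lemma st2: "sat t a \<Longrightarrow> sat t b \<Longrightarrow> (\<And>v. peval v a \<Longrightarrow> peval v b \<Longrightarrow> peval v c) \<Longrightarrow> sat t c"
  by (rule sat_taut[of "[a, b]"]) auto

lemma sat_L: "\<phi> \<in> L \<Longrightarrow> sat t \<phi>"
  unfolding sat_def by (rule taut_cons[OF logic, of "[\<phi>]"]) auto

lemma sat_mem: "x \<in> set S \<Longrightarrow> x \<in> t \<Longrightarrow> sat t x"
  unfolding sat_def by (rule taut_cons[OF logic, of "[]"]) (auto simp: peval_ct)

lemma sat_nmem: "x \<in> set S \<Longrightarrow> x \<notin> t \<Longrightarrow> sat t (Neg x)"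
  unfolding sat_def by (rule taut_cons[OF logic, of "[]"]) (auto simp: peval_ct)

lemma sat_cons: assumes "cons t" "sat t \<phi>" "sat t (Neg \<phi>)" shows False
proof -
  have "Neg (ct t) \<in> L" using assms(2,3) unfolding sat_def by (rule tc2[OF logic]) auto
  then show False using assms(1) unfolding cons_def by blast
qed

lemma mem_iff: "cons t \<Longrightarrow> x \<in> set S \<Longrightarrow> sat t x \<longleftrightarrow> x \<in> t"
  using sat_mem sat_nmem sat_cons by blast

lemma key:
  assumes H: "\<And>t. t \<subseteq> set S \<Longrightarrow> cons t \<Longrightarrow> sat t \<phi>"
  shows "\<phi> \<in> L"
proof -
  have all: "Imp (ct t) \<phi> \<in> L" if "t \<subseteq> set S" for t
  proof (cases "cons t")
    case True then show ?thesis using H that unfolding sat_def by blast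
  next
    case False
    then have "Neg (ct t) \<in> L" unfolding cons_def by simp
    then show ?thesis by (rule tc1[OF logic]) auto
  qed
  have "finite ((\<lambda>t. Imp (ct t) \<phi>) ` Pow (set S))" by simp
  then obtain xs where xs: "set xs = (\<lambda>t. Imp (ct t) \<phi>) ` Pow (set S)" using finite_list by blast
  show ?thesis
  proof (rule taut_cons[OF logic, of xs])
    show "set xs \<subseteq> L" using xs all by auto
    fix v assume A: "\<forall>x\<in>set xs. peval v x"
    let ?t = "{x\<in>set S. peval v x}"
    have "Imp (ct ?t) \<phi> \<in> set xs" using xs by auto
    then have "peval v (Imp (ct ?t) \<phi>)" using A by blast
    moreover have "peval v (ct ?t)" by (auto simp: peval_ct)
    ultimately show "peval v \<phi>" by simp
  qed
qed

lemma finite_Ty: "finite Ty"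
  unfolding Ty_def by (rule finite_subset[of _ "Pow (set S)"]) auto

definition e :: "nat \<Rightarrow> fm set" where "e = (SOME h. bij_betw h {0..<card Ty} Ty)"
definition W :: "nat set" where "W = {0..<card Ty}"

lemma e_bij: "bij_betw e W Ty"
  unfolding e_def W_def using someI_ex[OF ex_bij_betw_nat_finite[OF finite_Ty]] .

lemma e_Ty: "i \<in> W \<Longrightarrow> e i \<in> Ty" using e_bij bij_betwE by blast
lemma e_cons: "i \<in> W \<Longrightarrow> cons (e i)" using e_Ty unfolding Ty_def by blast
lemma e_sub: "i \<in> W \<Longrightarrow> e i \<subseteq> set S" using e_Ty unfolding Ty_def by blast
lemma e_surj: assumes "t \<subseteq> set S" "cons t" shows "\<exists>i\<in>W. e i = t"
proof -
  have "t \<in> Ty" using assms unfolding Ty_def by blast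
  then have "t \<in> e ` W" using e_bij unfolding bij_betw_def by simp
  then show ?thesis by blast
qed

definition ext :: "fm \<Rightarrow> nat set" where "ext \<phi> = {i\<in>W. \<phi> \<in> e i}"
definition V0 :: "nat \<Rightarrow> nat set" where "V0 n = ext (Var n)"

lemma in_ext: "i \<in> W \<Longrightarrow> x \<in> set S \<Longrightarrow> i \<in> ext x \<longleftrightarrow> sat (e i) x"
  unfolding ext_def using mem_iff e_cons by blast

lemma ext_sub: "ext x \<subseteq> W" unfolding ext_def by blast

lemma ext_L: "a \<in> set S \<Longrightarrow> b \<in> set S \<Longrightarrow> Imp a b \<in> L \<Longrightarrow> ext a \<subseteq> ext b"
proof
  fix i assume a: "a \<in> set S" "b \<in> set S" "Imp a b \<in> L" "i \<in> ext a"
  then have i: "i \<in> W" using ext_sub by blast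
  have "sat (e i) a" using a i in_ext by blast
  moreover have "sat (e i) (Imp a b)" using sat_L a by blast
  ultimately have "sat (e i) b" by (rule st2) auto
  then show "i \<in> ext b" using in_ext i a by blast
qed

lemma L_ext: assumes "a \<in> set S" "b \<in> set S" "ext a \<subseteq> ext b" shows "Imp a b \<in> L"
proof (rule key)
  fix t assume t: "t \<subseteq> set S" "cons t"
  then obtain i where i: "i \<in> W" "e i = t" using e_surj by blast
  show "sat t (Imp a b)"
  proof (cases "a \<in> t")
    case True
    then have "i \<in> ext b" using assms i unfolding ext_def by auto
    then have "sat t b" using in_ext[OF i(1) assms(2)] i by simp
    then show ?thesis by (rule st1) auto
  next
    case False
    then have "sat t (Neg a)" using sat_nmem assms by blast
    then show ?thesis by (rule st1) auto
  qed
qed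

lemma truth_lemma:
  assumes B: "\<And>a. Box a \<in> set S \<Longrightarrow> B (ext a) = ext (Box a)"
  shows "\<phi> \<in> set S \<Longrightarrow> truth (W, B) V0 \<phi> = ext \<phi>"
proof (induct \<phi>)
  case (Var n) then show ?case by (simp add: V0_def)
next
  case (Neg a)
  then have a: "a \<in> set S" using clN by blast
  have "ext (Neg a) = W - ext a"
  proof (intro set_eqI iffI)
    fix i assume i: "i \<in> ext (Neg a)"
    then have iW: "i \<in> W" using ext_sub by blast
    have "sat (e i) (Neg a)" using in_ext[OF iW Neg.prems] i by blast
    then have "\<not> sat (e i) a" using sat_cons e_cons iW by blast
    then show "i \<in> W - ext a" using in_ext[OF iW a] iW by blast
  next
    fix i assume i: "i \<in> W - ext a"
    then have "a \<notin> e i" unfolding ext_def by blast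
    then have "sat (e i) (Neg a)" using sat_nmem a by blast
    then show "i \<in> ext (Neg a)" using in_ext[OF _ Neg.prems] i by blast
  qed
  then show ?case using Neg a by simp
next
  case (Conj a b)
  then have ab: "a \<in> set S" "b \<in> set S" using clC by blast+
  have "ext (Conj a b) = ext a \<inter> ext b"
  proof (intro set_eqI iffI)
    fix i assume i: "i \<in> ext (Conj a b)"
    then have iW: "i \<in> W" using ext_sub by blast
    have c: "sat (e i) (Conj a b)" using in_ext[OF iW Conj.prems] i by blast
    have "sat (e i) a" using c by (rule st1) auto
    moreover have "sat (e i) b" using c by (rule st1) auto
    ultimately show "i \<in> ext a \<inter> ext b" using in_ext[OF iW] ab by blast
  next
    fix i assume i: "i \<in> ext a \<inter> ext b"
    then have iW: "i \<in> W" using ext_sub by blast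
    have "sat (e i) a" "sat (e i) b" using in_ext[OF iW] ab i by blast+
    then have "sat (e i) (Conj a b)" by (rule st2) auto
    then show "i \<in> ext (Conj a b)" using in_ext[OF iW Conj.prems] by blast
  qed
  then show ?case using Conj ab by simp
next
  case (Box a)
  then have a: "a \<in> set S" using clB by blast
  then show ?case using Box B by simp
qed


lemma frame_good:
  assumes B: "\<And>a. Box a \<in> set S \<Longrightarrow> B (ext a) = ext (Box a)"
    and BW: "\<And>Y. Y \<subseteq> W \<Longrightarrow> B Y \<subseteq> W"
    and psi: "variable_free \<psi>" "\<psi> \<in> set S" "\<psi> \<in> L"
    and a: "a \<in> set S" "a \<notin> L"
  shows "is_frame (W,B) \<and> finite W \<and> valid_in (W,B) \<psi> \<and> \<not> valid_in (W,B) a"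
proof -
  obtain t where t: "t \<subseteq> set S" "cons t" "\<not> sat t a" using key a(2) by blast
  obtain i where i: "i \<in> W" "e i = t" using e_surj[OF t(1,2)] by blast
  have fr: "is_frame (W,B)" unfolding is_frame_def using i BW by auto
  have fin: "finite W" unfolding W_def by simp
  have V0W: "\<forall>n. V0 n \<subseteq> W" unfolding V0_def using ext_sub by blast
  have "ext \<psi> = W"
    using in_ext[OF _ psi(2)] sat_L[OF psi(3)] ext_sub by blast
  then have vp: "valid_in (W,B) \<psi>"
    unfolding valid_in_def using vf_indep[OF psi(1), of "(W,B)" _ V0] truth_lemma[OF B psi(2)] by simp
  have "i \<notin> ext a" using in_ext[OF i(1) a(1)] i t by simp
  then have "\<not> valid_in (W,B) a"
    unfolding valid_in_def using truth_lemma[OF B a(1)] V0W i by auto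
  then show ?thesis using fr fin vp by blast
qed

lemma box_cong:
  assumes "Box a \<in> set S" "Box b \<in> set S" "ext a = ext b"
  shows "ext (Box a) = ext (Box b)"
proof -
  have ab: "a \<in> set S" "b \<in> set S" using assms clB by blast+
  have "Imp a b \<in> L" "Imp b a \<in> L" using L_ext ab assms(3) by auto
  then have "Iff a b \<in> L" by (rule tc2[OF logic]) auto
  then have "Iff (Box a) (Box b) \<in> L" by (rule logic_RE[OF logic])
  then have i1: "Imp (Box a) (Box b) \<in> L" by (rule tc1[OF logic]) auto
  from \<open>Iff (Box a) (Box b) \<in> L\<close> have i2: "Imp (Box b) (Box a) \<in> L" by (rule tc1[OF logic]) auto
  from i1 i2 show ?thesis using ext_L assms by (meson subset_antisym)
qed

definition B4 :: "nat set \<Rightarrow> nat set" where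
  "B4 Y = (if \<exists>a. Box a \<in> set S \<and> Y = ext a then ext (Box (SOME a. Box a \<in> set S \<and> Y = ext a)) else Y)"

lemma B4_truth: "Box a \<in> set S \<Longrightarrow> B4 (ext a) = ext (Box a)"
proof -
  assume a: "Box a \<in> set S"
  let ?a = "SOME b. Box b \<in> set S \<and> ext a = ext b"
  have "Box ?a \<in> set S \<and> ext a = ext ?a" using someI[of "\<lambda>b. Box b \<in> set S \<and> ext a = ext b" a] a by blast
  then show ?thesis unfolding B4_def using a box_cong[of ?a a] by auto
qed

lemma B4_W: "Y \<subseteq> W \<Longrightarrow> B4 Y \<subseteq> W" unfolding B4_def using ext_sub by auto

lemma B4_4:
  assumes A4: "ax4 \<in> L" and Y: "Y \<subseteq> W"
  shows "B4 Y \<subseteq> B4 (B4 Y)"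
proof (cases "\<exists>a. Box a \<in> set S \<and> Y = ext a")
  case True
  let ?a = "SOME a. Box a \<in> set S \<and> Y = ext a"
  have a: "Box ?a \<in> set S" "Y = ext ?a" using someI_ex[OF True] by blast+
  have BY: "B4 Y = ext (Box ?a)" unfolding B4_def using True by simp
  show ?thesis
  proof (cases "\<exists>b. Box b \<in> set S \<and> ext (Box ?a) = ext b")
    case True2: True
    let ?b = "SOME b. Box b \<in> set S \<and> ext (Box ?a) = ext b"
    have b: "Box ?b \<in> set S" "ext (Box ?a) = ext ?b" using someI_ex[OF True2] by blast+
    have BBY0: "B4 (ext (Box ?a)) = ext (Box ?b)" unfolding B4_def using True2 by simp
    have BBY: "B4 (B4 Y) = ext (Box ?b)" using BBY0 BY by simp
    have bS: "?b \<in> set S" using b clB by blast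
    have "Imp (Box ?a) ?b \<in> L" "Imp ?b (Box ?a) \<in> L" using L_ext a bS b by auto
    then have "Iff (Box ?a) ?b \<in> L" by (rule tc2[OF logic]) auto
    then have "Iff (Box (Box ?a)) (Box ?b) \<in> L" by (rule logic_RE[OF logic])
    moreover have "Imp (Box ?a) (Box (Box ?a)) \<in> L" by (rule ax4_inst[OF logic A4])
    ultimately have "Imp (Box ?a) (Box ?b) \<in> L"
      by (rule tc2[OF logic]) auto
    then show ?thesis unfolding BY BBY0 by (rule ext_L[OF a(1) b(1)])
  next
    case False
    then have "B4 (ext (Box ?a)) = ext (Box ?a)" unfolding B4_def by auto
    then show ?thesis unfolding BY by simp
  qed
next
  case False
  then have "B4 Y = Y" unfolding B4_def by auto
  then show ?thesis by simp
qed

definition BS4 :: "nat set \<Rightarrow> nat set" where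
  "BS4 Y = \<Union> ((\<lambda>a. ext (Box a)) ` {a. Box a \<in> set S \<and> ext (Box a) \<subseteq> Y})"

lemma BS4_truth:
  assumes A4: "ax4 \<in> L" and AT: "axT \<in> L" and AM: "axM \<in> L" and a: "Box a \<in> set S"
  shows "BS4 (ext a) = ext (Box a)"
proof
  have aS: "a \<in> set S" using a clB by blast
  show "BS4 (ext a) \<subseteq> ext (Box a)"
    unfolding BS4_def
  proof (rule Union_least)
    fix X assume "X \<in> (\<lambda>a. ext (Box a)) ` {b. Box b \<in> set S \<and> ext (Box b) \<subseteq> ext a}"
    then obtain b where b: "Box b \<in> set S" "ext (Box b) \<subseteq> ext a" "X = ext (Box b)" by blast
    have "Imp (Box b) a \<in> L" using L_ext[OF b(1) aS b(2)] .
    then have "Imp (Box (Box b)) (Box a) \<in> L" by (rule mono_rule[OF logic AM])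
    moreover have "Imp (Box b) (Box (Box b)) \<in> L" by (rule ax4_inst[OF logic A4])
    ultimately have "Imp (Box b) (Box a) \<in> L"
      by (rule tc2[OF logic]) auto
    then show "X \<subseteq> ext (Box a)" using ext_L b a by blast
  qed
  have "ext (Box a) \<subseteq> ext a" using ext_L[OF a aS axT_inst[OF logic AT]] .
  then show "ext (Box a) \<subseteq> BS4 (ext a)" unfolding BS4_def using a by blast
qed

lemma BS4_W: "BS4 Y \<subseteq> W" unfolding BS4_def using ext_sub by blast
lemma BS4_4: "BS4 Y \<subseteq> BS4 (BS4 Y)" unfolding BS4_def by blast
lemma BS4_T: "BS4 Y \<subseteq> Y" unfolding BS4_def by blast
lemma BS4_M: "BS4 (X \<inter> Y) \<subseteq> BS4 X \<inter> BS4 Y" unfolding BS4_def by blast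

definition K :: "nat \<Rightarrow> nat set" where
  "K i = W \<inter> \<Inter> ((\<lambda>a. ext a \<inter> ext (Box a)) ` {a. Box a \<in> set S \<and> Box a \<in> e i})"

definition BC :: "nat set \<Rightarrow> nat set" where
  "BC Y = {i\<in>W. Box Top \<in> e i \<and> K i \<subseteq> Y}"

lemma BC_W: "BC Y \<subseteq> W" unfolding BC_def by blast
lemma BC_M: "BC (X \<inter> Y) \<subseteq> BC X \<inter> BC Y" unfolding BC_def by blast
lemma BC_C: "BC X \<inter> BC Y \<subseteq> BC (X \<inter> Y)" unfolding BC_def by blast

lemma BC_4: assumes BT: "Box Top \<in> set S" shows "BC Y \<subseteq> BC (BC Y)"
proof
  fix i assume i: "i \<in> BC Y"
  have "K i \<subseteq> BC Y"
  proof
    fix j assume j: "j \<in> K i"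
    then have jW: "j \<in> W" unfolding K_def by blast
    have "j \<in> ext (Box Top)" using j i BT unfolding K_def BC_def by blast
    then have "Box Top \<in> e j" unfolding ext_def by blast
    moreover have "K j \<subseteq> K i"
    proof
      fix x assume x: "x \<in> K j"
      have "x \<in> ext b \<inter> ext (Box b)" if "Box b \<in> set S" "Box b \<in> e i" for b
      proof -
        have "j \<in> ext (Box b)" using j that unfolding K_def by blast
        then have "Box b \<in> e j" unfolding ext_def by blast
        then show ?thesis using x that unfolding K_def by blast
      qed
      then show "x \<in> K i" using x unfolding K_def by blast
    qed
    ultimately show "j \<in> BC Y" using jW i unfolding BC_def by blast
  qed
  then show "i \<in> BC (BC Y)" using i unfolding BC_def by blast
qed

end

lemma Cconj:
  assumes L: "is_logic L" and C: "axC \<in> L"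
  shows "Imp (Conj (conjs (map Box P)) (Box Top)) (Box (conjs P)) \<in> L"
proof (induct P)
  case Nil
  show ?case by (rule taut_cons[OF L, of "[]"]) auto
next
  case (Cons b P)
  have "Imp (Conj (Box b) (Box (conjs P))) (Box (Conj b (conjs P))) \<in> L" by (rule axC_inst[OF L C])
  then show ?case using Cons by (rule tc2[OF L]) auto
qed


context canon begin

lemma BC_truth:
  assumes A4: "ax4 \<in> L" and AM: "axM \<in> L" and AC: "axC \<in> L"
    and BT: "Box Top \<in> set S" and a: "Box a \<in> set S"
  shows "BC (ext a) = ext (Box a)"
proof
  have aS: "a \<in> set S" using a clB by blast
  have TS: "Top \<in> set S" using BT clB by blast
  show "ext (Box a) \<subseteq> BC (ext a)"
  proof
    fix i assume i: "i \<in> ext (Box a)"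
    then have iW: "i \<in> W" using ext_sub by blast
    have "Imp a Top \<in> L" by (rule taut_cons[OF logic, of "[]"]) auto
    then have "Imp (Box a) (Box Top) \<in> L" by (rule mono_rule[OF logic AM])
    then have "i \<in> ext (Box Top)" using ext_L[OF a BT] i by blast
    then have "Box Top \<in> e i" unfolding ext_def by blast
    moreover have "Box a \<in> e i" using i unfolding ext_def by blast
    then have "K i \<subseteq> ext a" unfolding K_def using a by blast
    ultimately show "i \<in> BC (ext a)" unfolding BC_def using iW by blast
  qed
  show "BC (ext a) \<subseteq> ext (Box a)"
  proof
    fix i assume i: "i \<in> BC (ext a)"
    then have iW: "i \<in> W" and iT: "Box Top \<in> e i" and Ki: "K i \<subseteq> ext a" unfolding BC_def by blast+
    let ?P = "{b. Box b \<in> set S \<and> Box b \<in> e i}"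
    have "?P \<subseteq> (\<lambda>x. case x of Box b \<Rightarrow> b | _ \<Rightarrow> x) ` set S"
      by (auto intro!: image_eqI)
    then have "finite ?P" using finite_subset by blast
    then obtain P where P: "set P = ?P" using finite_list by blast
    define m where "m = conjs P"
    have s1: "Imp (conjs (map (\<lambda>b. Conj b (Box b)) P)) a \<in> L"
    proof (rule key)
      fix t assume t: "t \<subseteq> set S" "cons t"
      then obtain j where j: "j \<in> W" "e j = t" using e_surj by blast
      show "sat t (Imp (conjs (map (\<lambda>b. Conj b (Box b)) P)) a)"
      proof (cases "\<forall>b\<in>set P. b \<in> t \<and> Box b \<in> t")
        case True
        have "j \<in> K i" unfolding K_def using j True P unfolding ext_def by auto
        then have "a \<in> t" using Ki j unfolding ext_def by blast
        then have "sat t a" using sat_mem aS by blast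
        then show ?thesis by (rule st1) auto
      next
        case False
        then obtain b where b: "b \<in> set P" "b \<notin> t \<or> Box b \<notin> t" by blast
        have bS: "Box b \<in> set S" "b \<in> set S" using b P clB by auto
        show ?thesis
        proof (cases "b \<in> t")
          case True
          then have "sat t (Neg (Box b))" using b bS sat_nmem by blast
          then show ?thesis by (rule st1) (use b(1) in auto)
        next
          case False
          then have "sat t (Neg b)" using bS sat_nmem by blast
          then show ?thesis by (rule st1) (use b(1) in auto)
        qed
      qed
    qed
    have s2: "Imp (Box m) (Box b) \<in> L" if "b \<in> set P" for b
    proof -
      have "Imp m b \<in> L" unfolding m_def by (rule taut_cons[OF logic, of "[]"]) (use that in auto)
      then show ?thesis by (rule mono_rule[OF logic AM])
    qed
    have s3: "Imp (Conj m (Box m)) a \<in> L"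
    proof (rule taut_cons[OF logic, of "Imp (conjs (map (\<lambda>b. Conj b (Box b)) P)) a # map (\<lambda>b. Imp (Box m) (Box b)) P"])
      show "set (Imp (conjs (map (\<lambda>b. Conj b (Box b)) P)) a # map (\<lambda>b. Imp (Box m) (Box b)) P) \<subseteq> L"
        using s1 s2 by auto
      fix v assume "\<forall>x\<in>set (Imp (conjs (map (\<lambda>b. Conj b (Box b)) P)) a # map (\<lambda>b. Imp (Box m) (Box b)) P). peval v x"
      then show "peval v (Imp (Conj m (Box m)) a)" unfolding m_def by auto
    qed
    have s4: "Imp (Box (Conj m (Box m))) (Box a) \<in> L" using mono_rule[OF logic AM s3] .
    have s5: "Imp (Conj (Box m) (Box (Box m))) (Box (Conj m (Box m))) \<in> L" by (rule axC_inst[OF logic AC])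
    have s6: "Imp (Box m) (Box (Box m)) \<in> L" by (rule ax4_inst[OF logic A4])
    have s7: "Imp (Box m) (Box a) \<in> L"
      using s4 s5 s6 by (rule tc3[OF logic]) auto
    have cc: "Imp (Conj (conjs (map Box P)) (Box Top)) (Box m) \<in> L"
      unfolding m_def by (rule Cconj[OF logic AC])
    have "sat (e i) (Box m)"
    proof (rule sat_taut[of "Box Top # Imp (Conj (conjs (map Box P)) (Box Top)) (Box m) # map Box P"])
      show "\<forall>x\<in>set (Box Top # Imp (Conj (conjs (map Box P)) (Box Top)) (Box m) # map Box P). sat (e i) x"
        using sat_mem[OF BT iT] sat_L[OF cc] sat_mem P by auto
      fix v assume "\<forall>x\<in>set (Box Top # Imp (Conj (conjs (map Box P)) (Box Top)) (Box m) # map Box P). peval v x"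
      then show "peval v (Box m)" by auto
    qed
    then have "sat (e i) (Box a)" using sat_L[OF s7] by (rule st2) auto
    then show "i \<in> ext (Box a)" using in_ext[OF iW a] by blast
  qed
qed

end

lemma valid_ax4I: "(\<And>Y. Y \<subseteq> W \<Longrightarrow> B Y \<subseteq> B (B Y)) \<Longrightarrow> valid_in (W,B) ax4"
  unfolding valid_in_def ax4_def Imp_def p0_def by auto
lemma valid_axTI: "(\<And>Y. Y \<subseteq> W \<Longrightarrow> B Y \<subseteq> Y) \<Longrightarrow> valid_in (W,B) axT"
  unfolding valid_in_def axT_def Imp_def p0_def by auto
lemma valid_axMI: "(\<And>X Y. X \<subseteq> W \<Longrightarrow> Y \<subseteq> W \<Longrightarrow> B (X \<inter> Y) \<subseteq> B X \<inter> B Y) \<Longrightarrow> valid_in (W,B) axM"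
  unfolding valid_in_def axM_def Imp_def p0_def q0_def by auto
lemma valid_axCI: "(\<And>X Y. X \<subseteq> W \<Longrightarrow> Y \<subseteq> W \<Longrightarrow> B X \<inter> B Y \<subseteq> B (X \<inter> Y)) \<Longrightarrow> valid_in (W,B) axC"
  unfolding valid_in_def axC_def Imp_def p0_def q0_def by auto

lemma subf_N: "Neg x \<in> set (subf y) \<Longrightarrow> x \<in> set (subf y)"
  by (induct y) (auto simp: subf_self)
lemma subf_C: "Conj x z \<in> set (subf y) \<Longrightarrow> x \<in> set (subf y) \<and> z \<in> set (subf y)"
  by (induct y) (auto simp: subf_self)
lemma subf_B: "Box x \<in> set (subf y) \<Longrightarrow> x \<in> set (subf y)"
  by (induct y) (auto simp: subf_self)

lemma canon_S: assumes L: "is_logic L" shows "canon L (subf a @ subf \<psi> @ subf (Box Top))"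
proof
  show "is_logic L" by (rule L)
next
  fix x assume "Neg x \<in> set (subf a @ subf \<psi> @ subf (Box Top))"
  then show "x \<in> set (subf a @ subf \<psi> @ subf (Box Top))"
    unfolding set_append Un_iff using subf_N[of x a] subf_N[of x \<psi>] subf_N[of x "Box Top"] by blast
next
  fix x z assume "Conj x z \<in> set (subf a @ subf \<psi> @ subf (Box Top))"
  then show "x \<in> set (subf a @ subf \<psi> @ subf (Box Top)) \<and> z \<in> set (subf a @ subf \<psi> @ subf (Box Top))"
    unfolding set_append Un_iff using subf_C[of x z a] subf_C[of x z \<psi>] subf_C[of x z "Box Top"] by blast
next
  fix x assume "Box x \<in> set (subf a @ subf \<psi> @ subf (Box Top))"
  then show "x \<in> set (subf a @ subf \<psi> @ subf (Box Top))"
    unfolding set_append Un_iff using subf_B[of x a] subf_B[of x \<psi>] subf_B[of x "Box Top"] by blast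
qed


lemma frame_E4:
  assumes L: "is_logic L" and A4: "ax4 \<in> L" and vf: "variable_free \<psi>" and pL: "\<psi> \<in> L" and a: "a \<notin> L"
  shows "\<exists>F. is_frame F \<and> finite (fst F) \<and> valid_in F ax4 \<and> valid_in F \<psi> \<and> \<not> valid_in F a"
proof -
  interpret canon L "subf a @ subf \<psi> @ subf (Box Top)" by (rule canon_S[OF L])
  have "is_frame (W,B4) \<and> finite W \<and> valid_in (W,B4) \<psi> \<and> \<not> valid_in (W,B4) a"
    by (rule frame_good) (use B4_truth B4_W vf pL a subf_self in auto)
  moreover have "valid_in (W,B4) ax4" by (rule valid_ax4I) (rule B4_4[OF A4])
  ultimately show ?thesis by (metis fst_conv)
qed

lemma frame_S04:
  assumes L: "is_logic L" and A4: "ax4 \<in> L" and AT: "axT \<in> L" and AM: "axM \<in> L"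
    and vf: "variable_free \<psi>" and pL: "\<psi> \<in> L" and a: "a \<notin> L"
  shows "\<exists>F. is_frame F \<and> finite (fst F) \<and> valid_in F ax4 \<and> valid_in F axT \<and> valid_in F axM
     \<and> valid_in F \<psi> \<and> \<not> valid_in F a"
proof -
  interpret canon L "subf a @ subf \<psi> @ subf (Box Top)" by (rule canon_S[OF L])
  have "is_frame (W,BS4) \<and> finite W \<and> valid_in (W,BS4) \<psi> \<and> \<not> valid_in (W,BS4) a"
    by (rule frame_good) (use BS4_truth[OF A4 AT AM] BS4_W vf pL a subf_self in auto)
  moreover have "valid_in (W,BS4) ax4" by (rule valid_ax4I) (rule BS4_4)
  moreover have "valid_in (W,BS4) axT" by (rule valid_axTI) (rule BS4_T)
  moreover have "valid_in (W,BS4) axM" by (rule valid_axMI) (rule BS4_M)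
  ultimately show ?thesis by (metis fst_conv)
qed

lemma frame_EMC4:
  assumes L: "is_logic L" and A4: "ax4 \<in> L" and AM: "axM \<in> L" and AC: "axC \<in> L"
    and vf: "variable_free \<psi>" and pL: "\<psi> \<in> L" and a: "a \<notin> L"
  shows "\<exists>F. is_frame F \<and> finite (fst F) \<and> valid_in F ax4 \<and> valid_in F axM \<and> valid_in F axC
     \<and> valid_in F \<psi> \<and> \<not> valid_in F a"
proof -
  interpret canon L "subf a @ subf \<psi> @ subf (Box Top)" by (rule canon_S[OF L])
  have BT: "Box Top \<in> set (subf a @ subf \<psi> @ subf (Box Top))" using subf_self by auto
  have "is_frame (W,BC) \<and> finite W \<and> valid_in (W,BC) \<psi> \<and> \<not> valid_in (W,BC) a"
    by (rule frame_good) (use BC_truth[OF A4 AM AC BT] BC_W vf pL a subf_self in auto)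
  moreover have "valid_in (W,BC) ax4" by (rule valid_ax4I) (rule BC_4[OF BT])
  moreover have "valid_in (W,BC) axM" by (rule valid_axMI) (rule BC_M)
  moreover have "valid_in (W,BC) axC" by (rule valid_axCI) (rule BC_C)
  ultimately show ?thesis by (metis fst_conv)
qed

lemma fmp_from:
  assumes "\<And>a. a \<notin> L \<Longrightarrow> \<exists>F. is_frame F \<and> finite (fst F) \<and> (\<forall>b\<in>L. valid_in F b) \<and> \<not> valid_in F a"
  shows "fmp L"
  unfolding fmp_def
proof (intro exI conjI)
  let ?C = "{F. is_frame F \<and> finite (fst F) \<and> (\<forall>b\<in>L. valid_in F b)}"
  show "\<forall>F\<in>?C. is_frame F \<and> finite (fst F)" by blast
  show "L = {a. \<forall>F\<in>?C. valid_in F a}"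
  proof
    show "L \<subseteq> {a. \<forall>F\<in>?C. valid_in F a}" by blast
    show "{a. \<forall>F\<in>?C. valid_in F a} \<subseteq> L"
    proof
      fix a assume a: "a \<in> {a. \<forall>F\<in>?C. valid_in F a}"
      show "a \<in> L"
      proof (rule ccontr)
        assume "a \<notin> L"
        then obtain F where "is_frame F \<and> finite (fst F) \<and> (\<forall>b\<in>L. valid_in F b) \<and> \<not> valid_in F a"
          using assms by blast
        then show False using a by blast
      qed
    qed
  qed
qed

lemma E4_sub: "is_logic L' \<Longrightarrow> ax4 \<in> L' \<Longrightarrow> E4 \<subseteq> L'"
  unfolding E4_def plus_def logicE_def using lg_least[of L' "{}"] lg_least by (metis Un_insert_right empty_subsetI insert_subset sup_bot.right_neutral)

lemma plus_sub: "is_logic L' \<Longrightarrow> L0 \<subseteq> L' \<Longrightarrow> \<psi> \<in> L' \<Longrightarrow> plus L0 \<psi> \<subseteq> L'"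
  unfolding plus_def by (rule lg_least) auto

lemma plus_in: "\<psi> \<in> plus L0 \<psi>" "L0 \<subseteq> plus L0 \<psi>"
  unfolding plus_def using lg_incl by blast+

lemma E4_ax4: "ax4 \<in> E4" unfolding E4_def using plus_in by blast

theorem mainTheorem3:
  assumes "variable_free \<psi>"
  shows "fmp (plus E4 \<psi>) \<and> fmp (plus S04 \<psi>) \<and> fmp (plus EMC4 \<psi>)"
proof (intro conjI)
  show "fmp (plus E4 \<psi>)"
  proof (rule fmp_from)
    fix a assume a: "a \<notin> plus E4 \<psi>"
    have L: "is_logic (plus E4 \<psi>)" unfolding plus_def by (rule lg_logic)
    have A4: "ax4 \<in> plus E4 \<psi>" using E4_ax4 plus_in by blast
    obtain F where F: "is_frame F" "finite (fst F)" "valid_in F ax4" "valid_in F \<psi>" "\<not> valid_in F a"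
      using frame_E4[OF L A4 assms plus_in(1) a] by blast
    have VL: "is_logic {b. valid_in F b}" by (rule valid_logic[OF F(1)])
    have "plus E4 \<psi> \<subseteq> {b. valid_in F b}"
      by (rule plus_sub[OF VL E4_sub[OF VL]]) (use F in auto)
    then show "\<exists>F. is_frame F \<and> finite (fst F) \<and> (\<forall>b\<in>plus E4 \<psi>. valid_in F b) \<and> \<not> valid_in F a"
      using F by blast
  qed
  show "fmp (plus S04 \<psi>)"
  proof (rule fmp_from)
    fix a assume a: "a \<notin> plus S04 \<psi>"
    have L: "is_logic (plus S04 \<psi>)" unfolding plus_def by (rule lg_logic)
    have A4: "ax4 \<in> plus S04 \<psi>" using E4_ax4 plus_in unfolding S04_def by blast
    have AT: "axT \<in> plus S04 \<psi>" using plus_in unfolding S04_def by blast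
    have AM: "axM \<in> plus S04 \<psi>" using plus_in unfolding S04_def by blast
    obtain F where F: "is_frame F" "finite (fst F)" "valid_in F ax4" "valid_in F axT" "valid_in F axM"
        "valid_in F \<psi>" "\<not> valid_in F a"
      using frame_S04[OF L A4 AT AM assms plus_in(1) a] by blast
    have VL: "is_logic {b. valid_in F b}" by (rule valid_logic[OF F(1)])
    have "S04 \<subseteq> {b. valid_in F b}" unfolding S04_def
      by (rule plus_sub[OF VL plus_sub[OF VL E4_sub[OF VL]]]) (use F in auto)
    then have "plus S04 \<psi> \<subseteq> {b. valid_in F b}"
      by (rule plus_sub[OF VL]) (use F in auto)
    then show "\<exists>F. is_frame F \<and> finite (fst F) \<and> (\<forall>b\<in>plus S04 \<psi>. valid_in F b) \<and> \<not> valid_in F a"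
      using F by blast
  qed
  show "fmp (plus EMC4 \<psi>)"
  proof (rule fmp_from)
    fix a assume a: "a \<notin> plus EMC4 \<psi>"
    have L: "is_logic (plus EMC4 \<psi>)" unfolding plus_def by (rule lg_logic)
    have A4: "ax4 \<in> plus EMC4 \<psi>" using E4_ax4 plus_in unfolding EMC4_def by blast
    have AM: "axM \<in> plus EMC4 \<psi>" using plus_in unfolding EMC4_def by blast
    have AC: "axC \<in> plus EMC4 \<psi>" using plus_in unfolding EMC4_def by blast
    obtain F where F: "is_frame F" "finite (fst F)" "valid_in F ax4" "valid_in F axM" "valid_in F axC"
        "valid_in F \<psi>" "\<not> valid_in F a"
      using frame_EMC4[OF L A4 AM AC assms plus_in(1) a] by blast
    have VL: "is_logic {b. valid_in F b}" by (rule valid_logic[OF F(1)])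
    have "EMC4 \<subseteq> {b. valid_in F b}" unfolding EMC4_def
      by (rule plus_sub[OF VL plus_sub[OF VL E4_sub[OF VL]]]) (use F in auto)
    then have "plus EMC4 \<psi> \<subseteq> {b. valid_in F b}"
      by (rule plus_sub[OF VL]) (use F in auto)
    then show "\<exists>F. is_frame F \<and> finite (fst F) \<and> (\<forall>b\<in>plus EMC4 \<psi>. valid_in F b) \<and> \<not> valid_in F a"
      using F by blast
  qed
qed

end
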